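(* Let $(\Omega,\mathcal F)$ be a measurable space, $\mathcal X$ the set of bounded measurable functions, $\mathcal P_1,\dots,\mathcal P_n$ nonempty sets of probability measures on $(\Omega,\mathcal F)$, and $\alpha_1,\dots,\alpha_n\in(0,1)$. Then for all $X\in\mathcal X$, $$\mathop{\square}_{i=1}^n\sup_{\mathbb Q\in\mathcal P_i}\mathrm{VaR}^{\mathbb Q}_{\alpha_i}(X)=\inf\{x\in\mathbb R:\{X>x\}\in\mathcal C\},\qquad \mathcal C=\Big\{\bigcup_{i=1}^nA_i: A_i\in\mathcal F,\ \sup_{\mathbb Q\in\mathcal P_i}\mathbb Q(A_i)\le\alpha_i,\ i=1,\dots,n\Big\}.$$
   Context: For a probability $\mathbb Q$ and $\alpha\in(0,1)$, $\mathrm{VaR}^{\mathbb Q}_\alpha(X)=\inf\{x\in\mathbb R:\mathbb Q(X\ge x)\le\alpha\}$. Inf-convolution: $\mathop{\square}_{i=1}^n\rho_i(X)=\inf\{\sum_{i=1}^n\rho_i(X_i): X_i\in\mathcal X,\ \sum_iX_i=X\}$. *)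

theory Defs
  imports "HOL-Probability.Probability"
begin

definition prob_on :: "'a measure \<Rightarrow> 'a measure \<Rightarrow> bool" where
  "prob_on M Q \<longleftrightarrow> prob_space Q \<and> sets Q = sets M"

definition bdd_meas :: "'a measure \<Rightarrow> ('a \<Rightarrow> real) set" where
  "bdd_meas M = {X. X \<in> borel_measurable M \<and> (\<exists>B. \<forall>\<omega>\<in>space M. \<bar>X \<omega>\<bar> \<le> B)}"

definition VaR :: "'a measure \<Rightarrow> real \<Rightarrow> ('a \<Rightarrow> real) \<Rightarrow> real" where
  "VaR Q \<alpha> X = Inf {x::real. measure Q {\<omega>\<in>space Q. X \<omega> \<ge> x} \<le> \<alpha>}"

definition inf_conv :: "'a measure \<Rightarrow> nat \<Rightarrow> (nat \<Rightarrow> ('a \<Rightarrow> real) \<Rightarrow> ereal) \<Rightarrow> ('a \<Rightarrow> real) \<Rightarrow> ereal" where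
  "inf_conv M n \<rho> X = Inf {(\<Sum>i<n. \<rho> i (Xs i)) | Xs.
      (\<forall>i<n. Xs i \<in> bdd_meas M) \<and> (\<forall>\<omega>\<in>space M. (\<Sum>i<n. Xs i \<omega>) = X \<omega>)}"

definition sup_VaR :: "'a measure set \<Rightarrow> real \<Rightarrow> ('a \<Rightarrow> real) \<Rightarrow> ereal" where
  "sup_VaR PP \<alpha> X = (SUP Q\<in>PP. ereal (VaR Q \<alpha> X))"

definition calC :: "'a measure \<Rightarrow> nat \<Rightarrow> (nat \<Rightarrow> 'a measure set) \<Rightarrow> (nat \<Rightarrow> real) \<Rightarrow> 'a set set" where
  "calC M n P \<alpha> = {(\<Union>i<n. A i) | A.
      \<forall>i<n. A i \<in> sets M \<and> (SUP Q\<in>P i. ereal (measure Q (A i))) \<le> ereal (\<alpha> i)}"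

end

theory Submission
  imports Defs
begin


lemma VaR_le_iff:
  assumes Q: "prob_space Q" and Y: "Y \<in> borel_measurable Q"
    and B: "\<And>\<omega>. \<omega> \<in> space Q \<Longrightarrow> \<bar>Y \<omega>\<bar> \<le> B"
    and a: "0 < a" "a < 1"
  shows "VaR Q a Y \<le> y \<longleftrightarrow> measure Q {\<omega>\<in>space Q. Y \<omega> > y} \<le> a"
proof -
  interpret prob_space Q by fact
  define S where "S = {x::real. measure Q {\<omega>\<in>space Q. Y \<omega> \<ge> x} \<le> a}"
  have V: "VaR Q a Y = Inf S" unfolding VaR_def S_def ..
  have lb: "s > -B" if "s \<in> S" for s
  proof (rule ccontr)
    assume "\<not> s > -B"
    then have "{\<omega>\<in>space Q. Y \<omega> \<ge> s} = space Q" using B by force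
    then show False using that a by (simp add: S_def prob_space)
  qed
  have bdd: "bdd_below S" using lb by (intro bdd_belowI[of _ "-B"]) (auto intro: less_imp_le)
  have ne: "B + 1 \<in> S"
  proof -
    have e: "{\<omega>\<in>space Q. Y \<omega> \<ge> B + 1} = {}" using B by force
    show ?thesis using a unfolding S_def mem_Collect_eq e by simp
  qed
  show ?thesis
  proof
    assume le: "VaR Q a Y \<le> y"
    define C where "C k = {\<omega>\<in>space Q. Y \<omega> \<ge> y + 1 / Suc k}" for k :: nat
    have Cs: "C k \<in> sets Q" for k unfolding C_def using Y by measurable
    have inc: "incseq C"
    proof (rule incseq_SucI)
      fix k
      have "1 / real (Suc (Suc k)) \<le> 1 / Suc k" by (simp add: frac_le)
      then show "C k \<subseteq> C (Suc k)" unfolding C_def by auto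
    qed
    have U: "(\<Union>k. C k) = {\<omega>\<in>space Q. Y \<omega> > y}"
    proof safe
      fix \<omega> k assume "\<omega> \<in> C k" then show "y < Y \<omega>" unfolding C_def
        by (smt (verit) divide_pos_pos mem_Collect_eq of_nat_0_less_iff zero_less_Suc)
    next
      fix \<omega> k assume "\<omega> \<in> C k" then show "\<omega> \<in> space Q" unfolding C_def by auto
    next
      fix \<omega> assume "\<omega> \<in> space Q" "y < Y \<omega>"
      then obtain k where "inverse (real (Suc k)) < Y \<omega> - y"
        using reals_Archimedean[of "Y \<omega> - y"] by auto
      then show "\<omega> \<in> (\<Union>k. C k)" unfolding C_def using \<open>\<omega> \<in> space Q\<close>
        by (auto simp: field_simps intro!: exI[of _ k])
    qed
    have Ck: "measure Q (C k) \<le> a" for k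
    proof -
      have "Inf S < y + 1 / Suc k" using le V
        by (smt (verit) divide_pos_pos of_nat_0_less_iff zero_less_Suc)
      then obtain s where s: "s \<in> S" "s < y + 1 / Suc k"
        using cInf_less_iff[OF _ bdd] ne by blast
      have "measure Q (C k) \<le> measure Q {\<omega>\<in>space Q. Y \<omega> \<ge> s}"
        unfolding C_def using s Y by (intro finite_measure_mono) (auto, measurable)
      also have "\<dots> \<le> a" using s by (simp add: S_def)
      finally show ?thesis .
    qed
    have "(\<lambda>k. measure Q (C k)) \<longlonglongrightarrow> measure Q (\<Union>k. C k)"
      using Cs inc by (intro finite_Lim_measure_incseq) auto
    then have "measure Q (\<Union>k. C k) \<le> a"
      by (rule LIMSEQ_le_const2) (use Ck in auto)
    then show "measure Q {\<omega>\<in>space Q. Y \<omega> > y} \<le> a" using U by simp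
  next
    assume le: "measure Q {\<omega>\<in>space Q. Y \<omega> > y} \<le> a"
    have inS: "z \<in> S" if "z > y" for z
    proof -
      have "measure Q {\<omega>\<in>space Q. Y \<omega> \<ge> z} \<le> measure Q {\<omega>\<in>space Q. Y \<omega> > y}"
        using that Y by (intro finite_measure_mono) (auto, measurable)
      then show ?thesis using le by (simp add: S_def)
    qed
    show "VaR Q a Y \<le> y"
    proof (rule ccontr)
      assume "\<not> VaR Q a Y \<le> y"
      then have "(y + Inf S)/2 \<in> S" using V inS by simp
      then have "Inf S \<le> (y + Inf S)/2" using bdd by (rule cInf_lower)
      then show False using \<open>\<not> VaR Q a Y \<le> y\<close> V by simp
    qed
  qed
qed

lemma VaR_lower:
  assumes Q: "prob_space Q"
    and B: "\<And>\<omega>. \<omega> \<in> space Q \<Longrightarrow> \<bar>Y \<omega>\<bar> \<le> B"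
    and a: "0 < a" "a < 1"
  shows "VaR Q a Y \<ge> -B"
proof -
  interpret prob_space Q by fact
  define S where "S = {x::real. measure Q {\<omega>\<in>space Q. Y \<omega> \<ge> x} \<le> a}"
  have V: "VaR Q a Y = Inf S" unfolding VaR_def S_def ..
  have lb: "s > -B" if "s \<in> S" for s
  proof (rule ccontr)
    assume "\<not> s > -B"
    then have "{\<omega>\<in>space Q. Y \<omega> \<ge> s} = space Q" using B by force
    then show False using that a by (simp add: S_def prob_space)
  qed
  have ne: "B + 1 \<in> S"
  proof -
    have e: "{\<omega>\<in>space Q. Y \<omega> \<ge> B + 1} = {}" using B by force
    show ?thesis using a unfolding S_def mem_Collect_eq e by simp
  qed
  show ?thesis unfolding V using ne lb by (intro cInf_greatest) (auto intro: less_imp_le)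
qed


lemma prob_on_facts:
  assumes "prob_on M Q" "Y \<in> bdd_meas M"
  shows "prob_space Q" "space Q = space M" "Y \<in> borel_measurable Q" "sets Q = sets M"
proof -
  have s: "sets Q = sets M" using assms(1) unfolding prob_on_def by simp
  show "prob_space Q" using assms(1) unfolding prob_on_def by simp
  show "space Q = space M" using s by (rule sets_eq_imp_space_eq)
  show "sets Q = sets M" by (fact s)
  have "Y \<in> borel_measurable M" using assms(2) unfolding bdd_meas_def by simp
  then show "Y \<in> borel_measurable Q" by (metis measurable_cong_sets s)
qed


lemma sup_VaR_le_iff:
  assumes PP: "\<And>Q. Q \<in> PP \<Longrightarrow> prob_on M Q" and a: "0 < a" "a < 1" and Y: "Y \<in> bdd_meas M"
  shows "sup_VaR PP a Y \<le> ereal y \<longleftrightarrow> (\<forall>Q\<in>PP. measure Q {\<omega>\<in>space M. Y \<omega> > y} \<le> a)"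
proof -
  obtain B where B: "\<And>\<omega>. \<omega> \<in> space M \<Longrightarrow> \<bar>Y \<omega>\<bar> \<le> B" using Y unfolding bdd_meas_def by auto
  have "VaR Q a Y \<le> y \<longleftrightarrow> measure Q {\<omega>\<in>space M. Y \<omega> > y} \<le> a" if "Q \<in> PP" for Q
    using VaR_le_iff[of Q Y B a y] prob_on_facts[OF PP[OF that] Y] B a by auto
  then show ?thesis unfolding sup_VaR_def by (auto simp: SUP_le_iff)
qed

lemma sup_VaR_real:
  assumes PP: "\<And>Q. Q \<in> PP \<Longrightarrow> prob_on M Q" and ne: "PP \<noteq> {}"
    and a: "0 < a" "a < 1" and Y: "Y \<in> bdd_meas M"
  shows "\<exists>r. sup_VaR PP a Y = ereal r"
proof -
  obtain B where B: "\<And>\<omega>. \<omega> \<in> space M \<Longrightarrow> \<bar>Y \<omega>\<bar> \<le> B" using Y unfolding bdd_meas_def by auto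
  have up: "sup_VaR PP a Y \<le> ereal B"
  proof -
    have e: "{\<omega>\<in>space M. Y \<omega> > B} = {}" using B by force
    have m: "\<forall>Q\<in>PP. measure Q {\<omega>\<in>space M. Y \<omega> > B} \<le> a" using a by (simp add: e) have "sup_VaR PP a Y \<le> ereal B \<longleftrightarrow> (\<forall>Q\<in>PP. measure Q {\<omega>\<in>space M. Y \<omega> > B} \<le> a)"
      by (rule sup_VaR_le_iff) (use PP a Y in auto)
    then show ?thesis using m by simp
  qed
  obtain Q0 where Q0: "Q0 \<in> PP" using ne by auto
  have "ereal (-B) \<le> ereal (VaR Q0 a Y)"
    using VaR_lower[of Q0 Y B a] prob_on_facts[OF PP[OF Q0] Y] B a by auto
  also have "\<dots> \<le> sup_VaR PP a Y" unfolding sup_VaR_def using Q0 by (rule SUP_upper)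
  finally have lo: "ereal (-B) \<le> sup_VaR PP a Y" .
  show ?thesis using up lo by (cases "sup_VaR PP a Y") auto
qed


theorem corollary1:
  fixes M :: "'a measure" and n :: nat
    and P :: "nat \<Rightarrow> 'a measure set" and \<alpha> :: "nat \<Rightarrow> real"
    and X :: "'a \<Rightarrow> real"
  assumes "n \<ge> 1"
    and "\<And>i. i < n \<Longrightarrow> P i \<noteq> {}"
    and "\<And>i Q. i < n \<Longrightarrow> Q \<in> P i \<Longrightarrow> prob_on M Q"
    and "\<And>i. i < n \<Longrightarrow> 0 < \<alpha> i \<and> \<alpha> i < 1"
    and "X \<in> bdd_meas M"
  shows "inf_conv M n (\<lambda>i. sup_VaR (P i) (\<alpha> i)) X
       = Inf {ereal x | x. {\<omega>\<in>space M. X \<omega> > x} \<in> calC M n P \<alpha>}"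
proof (rule antisym)
  note n = assms(1) and ne = assms(2) and PP = assms(3) and al = assms(4) and Xb = assms(5)
  obtain BX where BX: "\<And>\<omega>. \<omega> \<in> space M \<Longrightarrow> \<bar>X \<omega>\<bar> \<le> BX" using Xb unfolding bdd_meas_def by auto
  have Xm[measurable]: "X \<in> borel_measurable M" using Xb unfolding bdd_meas_def by auto
  show "inf_conv M n (\<lambda>i. sup_VaR (P i) (\<alpha> i)) X
       \<le> Inf {ereal x | x. {\<omega>\<in>space M. X \<omega> > x} \<in> calC M n P \<alpha>}"
  proof (rule Inf_greatest, safe)
    fix x assume "{\<omega>\<in>space M. X \<omega> > x} \<in> calC M n P \<alpha>"
    then obtain A where AU: "{\<omega>\<in>space M. X \<omega> > x} = (\<Union>i<n. A i)"
      and As[measurable]: "\<And>i. i < n \<Longrightarrow> A i \<in> sets M"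
      and Ale: "\<And>i. i < n \<Longrightarrow> (SUP Q\<in>P i. ereal (measure Q (A i))) \<le> ereal (\<alpha> i)"
      unfolding calC_def by auto
    define A' where "A' i = (if i < n then A i else {})" for i
    have A'm[measurable]: "A' i \<in> sets M" for i unfolding A'_def using As by auto
    have A'iff: "\<omega> \<in> A' i \<longleftrightarrow> i < n \<and> \<omega> \<in> A i" for \<omega> i unfolding A'_def by auto
    define k where "k \<omega> = (if \<exists>i. \<omega> \<in> A' i then LEAST i. \<omega> \<in> A' i else 0)" for \<omega>
    define y where "y i = (if i = 0 then x else 0)" for i :: nat
    define Xs where "Xs i \<omega> = y i + (if k \<omega> = i then X \<omega> - x else 0)" for i \<omega>
    have kP: "\<omega> \<in> A' (k \<omega>)" if "\<exists>i. \<omega> \<in> A' i" for \<omega>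
      using LeastI_ex[of "\<lambda>i. \<omega> \<in> A' i"] that by (simp add: k_def)
    have kn: "k \<omega> < n" for \<omega>
    proof (cases "\<exists>i. \<omega> \<in> A' i")
      case True then show ?thesis using kP[OF True] A'iff by blast
    next
      case False then show ?thesis using n unfolding k_def by simp
    qed
    have kA: "\<omega> \<in> A (k \<omega>)" if "\<omega> \<in> space M" "X \<omega> > x" for \<omega>
    proof -
      have "\<omega> \<in> (\<Union>i<n. A i)" using that AU by blast
      then have "\<exists>i. \<omega> \<in> A' i" using A'iff by blast
      then show ?thesis using kP A'iff by blast
    qed
    have km[measurable]: "k \<in> measurable M (count_space UNIV)"
      unfolding k_def by measurable
    have Xsm: "Xs i \<in> borel_measurable M" for i
      unfolding Xs_def by measurable
    have Xsb: "Xs i \<in> bdd_meas M" for i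
      unfolding bdd_meas_def using Xsm
      by (auto intro!: exI[of _ "\<bar>y i\<bar> + BX + \<bar>x\<bar>"] dest: BX simp: Xs_def)
    have sumX: "(\<Sum>i<n. Xs i \<omega>) = X \<omega>" for \<omega>
      using kn[of \<omega>] n unfolding Xs_def by (simp add: sum.distrib y_def)
    have rho: "sup_VaR (P i) (\<alpha> i) (Xs i) \<le> ereal (y i)" if i: "i < n" for i
    proof -
      have "measure Q {\<omega>\<in>space M. Xs i \<omega> > y i} \<le> \<alpha> i" if Q: "Q \<in> P i" for Q
      proof -
        have pQ: "prob_space Q" "sets Q = sets M" using prob_on_facts[OF PP[OF i Q] Xb] by auto
        interpret prob_space Q by fact
        have "measure Q {\<omega>\<in>space M. Xs i \<omega> > y i} \<le> measure Q (A i)"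
          using kA As[OF i] pQ(2) by (intro finite_measure_mono) (auto simp: Xs_def split: if_splits)
        also have "\<dots> \<le> \<alpha> i"
          using Ale[OF i] Q by (meson SUP_upper order_trans ereal_less_eq(3))
        finally show ?thesis .
      qed
      then show ?thesis using sup_VaR_le_iff[OF PP[OF i] _ _ Xsb] al[OF i] by auto
    qed
    have "inf_conv M n (\<lambda>i. sup_VaR (P i) (\<alpha> i)) X \<le> (\<Sum>i<n. sup_VaR (P i) (\<alpha> i) (Xs i))"
      unfolding inf_conv_def using Xsb sumX by (intro Inf_lower) auto
    also have "\<dots> \<le> (\<Sum>i<n. ereal (y i))" using rho by (intro sum_mono) auto
    also have "\<dots> = ereal x" using n by (simp add: y_def)
    finally show "inf_conv M n (\<lambda>i. sup_VaR (P i) (\<alpha> i)) X \<le> ereal x" .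
  qed
next
  note n = assms(1) and ne = assms(2) and PP = assms(3) and al = assms(4) and Xb = assms(5)
  have Xm[measurable]: "X \<in> borel_measurable M" using Xb unfolding bdd_meas_def by auto
  show "Inf {ereal x | x. {\<omega>\<in>space M. X \<omega> > x} \<in> calC M n P \<alpha>}
      \<le> inf_conv M n (\<lambda>i. sup_VaR (P i) (\<alpha> i)) X"
    unfolding inf_conv_def
  proof (rule Inf_greatest, safe)
    fix Xs assume Xsb: "\<forall>i<n. Xs i \<in> bdd_meas M" and sumX: "\<forall>\<omega>\<in>space M. (\<Sum>i<n. Xs i \<omega>) = X \<omega>"
    define r where "r i = real_of_ereal (sup_VaR (P i) (\<alpha> i) (Xs i))" for i
    have r: "sup_VaR (P i) (\<alpha> i) (Xs i) = ereal (r i)" if i: "i < n" for i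
    proof -
      obtain t where "sup_VaR (P i) (\<alpha> i) (Xs i) = ereal t"
        using sup_VaR_real[OF PP[OF i] ne[OF i]] al[OF i] Xsb i by blast
      then show ?thesis unfolding r_def by simp
    qed
    define s where "s = (\<Sum>i<n. r i)"
    have zs: "(\<Sum>i<n. sup_VaR (P i) (\<alpha> i) (Xs i)) = ereal s"
    proof -
      have "(\<Sum>i<n. sup_VaR (P i) (\<alpha> i) (Xs i)) = (\<Sum>i<n. ereal (r i))"
        by (rule sum.cong) (simp_all add: r)
      also have "\<dots> = ereal s" unfolding s_def by simp
      finally show ?thesis .
    qed
    have Xsm[measurable]: "Xs i \<in> borel_measurable M" if "i < n" for i
      using Xsb that unfolding bdd_meas_def by auto
    have mr: "measure Q {\<omega>\<in>space M. Xs i \<omega> > r i} \<le> \<alpha> i" if i: "i < n" and Q: "Q \<in> P i" for i Q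
    proof -
      have "sup_VaR (P i) (\<alpha> i) (Xs i) \<le> ereal (r i)" using r[OF i] by simp
      then show ?thesis using sup_VaR_le_iff[OF PP[OF i] _ _ Xsb[rule_format, OF i]] al[OF i] Q by auto
    qed
    define A where "A i = {\<omega>\<in>space M. Xs i \<omega> > r i \<and> X \<omega> > s}" for i
    have AU: "{\<omega>\<in>space M. X \<omega> > s} = (\<Union>i<n. A i)"
    proof safe
      fix \<omega> assume w: "\<omega> \<in> space M" "X \<omega> > s"
      show "\<omega> \<in> (\<Union>i<n. A i)"
      proof (rule ccontr)
        assume "\<omega> \<notin> (\<Union>i<n. A i)"
        have le: "Xs i \<omega> \<le> r i" if "i < n" for i
        proof -
          have "\<omega> \<notin> A i" using \<open>\<omega> \<notin> (\<Union>i<n. A i)\<close> that by blast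
          then show ?thesis using w unfolding A_def by auto
        qed
        have "(\<Sum>i<n. Xs i \<omega>) \<le> s" unfolding s_def by (rule sum_mono) (rule le, simp)
        moreover note sumX[rule_format, OF w(1)]
        ultimately show False using w(2) by linarith
      qed
    qed (auto simp: A_def)
    have "{\<omega>\<in>space M. X \<omega> > s} \<in> calC M n P \<alpha>"
      unfolding calC_def
    proof (rule CollectI, rule exI[of _ A], intro conjI allI impI)
      show "{\<omega>\<in>space M. X \<omega> > s} = (\<Union>i<n. A i)" by (fact AU)
    next
      fix i assume i: "i < n"
      show "A i \<in> sets M" unfolding A_def using i by measurable
      show "(SUP Q\<in>P i. ereal (measure Q (A i))) \<le> ereal (\<alpha> i)"
      proof (rule SUP_least)
        fix Q assume Q: "Q \<in> P i"
        have pQ: "prob_space Q" "sets Q = sets M" using prob_on_facts[OF PP[OF i Q] Xb] by auto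
        interpret prob_space Q by fact
        have "{\<omega>\<in>space M. Xs i \<omega> > r i} \<in> sets M" using i by measurable
        then have "measure Q (A i) \<le> measure Q {\<omega>\<in>space M. Xs i \<omega> > r i}"
          using pQ(2) by (intro finite_measure_mono) (auto simp: A_def)
        then show "ereal (measure Q (A i)) \<le> ereal (\<alpha> i)" using mr[OF i Q] by simp
      qed
    qed
    then have "ereal s \<in> {ereal x | x. {\<omega>\<in>space M. X \<omega> > x} \<in> calC M n P \<alpha>}" by blast
    then show "Inf {ereal x | x. {\<omega>\<in>space M. X \<omega> > x} \<in> calC M n P \<alpha>}
        \<le> (\<Sum>i<n. sup_VaR (P i) (\<alpha> i) (Xs i))" unfolding zs by (rule Inf_lower)
  qed
qed
end
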